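(* Let $G=\langle A,B\rangle$ be an abstract rank one group with unipotent subgroups $A,B$ and $V$ a $\mathbb{Z}G$-module with $[V,A,A,A]=0$, $[V,G,G,G]\neq0$, $[V,G]=V$ and $C_V(G)=0$, and suppose $A_0:=C_A([V,A])\cap C_A(V/C_V(A))\neq1$. Let $B_0=\{1\}\cup\{b(a):a\in A_0\setminus\{1\}\}$ and $G_0=\langle A_0,B_0\rangle$. Then (a) $[V,A]\cap[V,B]=C_V(G_0)$; (b) $[V,A]=C_V(A)\oplus C_V(G_0)$.
   Context: $G$ acts on $V$ on the right, $[v,g]=-v+vg$; $[X,Y]$ is the subgroup generated by all such commutators, $[X,Y,Z]=[[X,Y],Z]$. Abstract rank one group with unipotent subgroups $A,B$: $G=\langle A,B\rangle$, $A\neq B$ nilpotent, for each $a\in A\setminus\{1\}$ there is $b(a)\in B\setminus\{1\}$ with $B^a=A^{b(a)}$, and for each $b\in B\setminus\{1\}$ some $a(b)\in A\setminus\{1\}$ with $A^b=B^{a(b)}$. ($B_0$ is a subgroup of $B$ and $G_0$ is a rank one group with unipotent subgroups $A_0,B_0$.) *)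

theory Defs
  imports "HOL-Algebra.Algebra"
begin

fun lower_central :: "('g, 'b) monoid_scheme \<Rightarrow> 'g set \<Rightarrow> nat \<Rightarrow> 'g set" where
  "lower_central G H 0 = H"
| "lower_central G H (Suc n) =
     generate G {x \<otimes>\<^bsub>G\<^esub> y \<otimes>\<^bsub>G\<^esub> inv\<^bsub>G\<^esub> x \<otimes>\<^bsub>G\<^esub> inv\<^bsub>G\<^esub> y | x y. x \<in> lower_central G H n \<and> y \<in> H}"

definition nilpotent_subgroup :: "('g, 'b) monoid_scheme \<Rightarrow> 'g set \<Rightarrow> bool" where
  "nilpotent_subgroup G H \<longleftrightarrow> subgroup H G \<and> (\<exists>n. lower_central G H n = {\<one>\<^bsub>G\<^esub>})"

text \<open>Conjugate X^g = g^{-1} X g (right action convention).\<close>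
definition conj_set :: "('g, 'b) monoid_scheme \<Rightarrow> 'g set \<Rightarrow> 'g \<Rightarrow> 'g set" where
  "conj_set G S g = (\<lambda>x. inv\<^bsub>G\<^esub> g \<otimes>\<^bsub>G\<^esub> x \<otimes>\<^bsub>G\<^esub> g) ` S"

definition rank_one_group :: "('g, 'b) monoid_scheme \<Rightarrow> 'g set \<Rightarrow> 'g set \<Rightarrow> bool" where
  "rank_one_group G A B \<longleftrightarrow>
     group G \<and> subgroup A G \<and> subgroup B G \<and>
     carrier G = generate G (A \<union> B) \<and> A \<noteq> B \<and>
     nilpotent_subgroup G A \<and> nilpotent_subgroup G B \<and>
     (\<forall>a \<in> A - {\<one>\<^bsub>G\<^esub>}. \<exists>b \<in> B - {\<one>\<^bsub>G\<^esub>}. conj_set G B a = conj_set G A b) \<and>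
     (\<forall>b \<in> B - {\<one>\<^bsub>G\<^esub>}. \<exists>a \<in> A - {\<one>\<^bsub>G\<^esub>}. conj_set G A b = conj_set G B a)"

text \<open>V is the abelian group 'v (the whole type); act v g = vg is a right action of G
  by group automorphisms, i.e. a right ZG-module structure.\<close>
definition right_module :: "('g, 'b) monoid_scheme \<Rightarrow> ('v::ab_group_add \<Rightarrow> 'g \<Rightarrow> 'v) \<Rightarrow> bool" where
  "right_module G act \<longleftrightarrow>
     (\<forall>g \<in> carrier G. \<forall>v w. act (v + w) g = act v g + act w g) \<and>
     (\<forall>v. act v \<one>\<^bsub>G\<^esub> = v) \<and>
     (\<forall>g \<in> carrier G. \<forall>h \<in> carrier G. \<forall>v. act v (g \<otimes>\<^bsub>G\<^esub> h) = act (act v g) h)"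

definition add_gen :: "'v::ab_group_add set \<Rightarrow> 'v set" where
  "add_gen S = \<Inter>{H. 0 \<in> H \<and> (\<forall>x\<in>H. \<forall>y\<in>H. x + y \<in> H) \<and> (\<forall>x\<in>H. - x \<in> H) \<and> S \<subseteq> H}"

definition mcomm :: "('v::ab_group_add \<Rightarrow> 'g \<Rightarrow> 'v) \<Rightarrow> 'v \<Rightarrow> 'g \<Rightarrow> 'v" where
  "mcomm act v g = - v + act v g"

definition mcomm_set :: "('v::ab_group_add \<Rightarrow> 'g \<Rightarrow> 'v) \<Rightarrow> 'v set \<Rightarrow> 'g set \<Rightarrow> 'v set" where
  "mcomm_set act P Q = add_gen {mcomm act x y | x y. x \<in> P \<and> y \<in> Q}"

definition centralizer_V :: "('v \<Rightarrow> 'g \<Rightarrow> 'v) \<Rightarrow> 'g set \<Rightarrow> 'v set" where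
  "centralizer_V act Y = {v. \<forall>g \<in> Y. act v g = v}"

definition centralizer_in :: "('v \<Rightarrow> 'g \<Rightarrow> 'v) \<Rightarrow> 'g set \<Rightarrow> 'v set \<Rightarrow> 'g set" where
  "centralizer_in act A P = {a \<in> A. \<forall>v \<in> P. act v a = v}"

text \<open>C_A(V/W): elements of A acting trivially on the quotient V/W.\<close>
definition centralizer_quot :: "('v::ab_group_add \<Rightarrow> 'g \<Rightarrow> 'v) \<Rightarrow> 'g set \<Rightarrow> 'v set \<Rightarrow> 'g set" where
  "centralizer_quot act A W = {a \<in> A. \<forall>v. mcomm act v a \<in> W}"

definition set_plus_V :: "'v::ab_group_add set \<Rightarrow> 'v set \<Rightarrow> 'v set" where
  "set_plus_V P Q = {x + y | x y. x \<in> P \<and> y \<in> Q}"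

definition is_direct_sum :: "'v::ab_group_add set \<Rightarrow> 'v set \<Rightarrow> 'v set \<Rightarrow> bool" where
  "is_direct_sum Z P Q \<longleftrightarrow> Z = set_plus_V P Q \<and> P \<inter> Q = {0}"

end

theory Submission
  imports Defs
begin


lemma add_gen_incl: "x \<in> S \<Longrightarrow> x \<in> add_gen S" unfolding add_gen_def by blast
lemma add_gen_0: "0 \<in> add_gen S" unfolding add_gen_def by blast
lemma add_gen_add: "x \<in> add_gen S \<Longrightarrow> y \<in> add_gen S \<Longrightarrow> x + y \<in> add_gen S"
  unfolding add_gen_def by blast
lemma add_gen_neg: "x \<in> add_gen S \<Longrightarrow> - x \<in> add_gen S"
  unfolding add_gen_def by blast
lemma add_gen_diff: "x \<in> add_gen S \<Longrightarrow> y \<in> add_gen S \<Longrightarrow> x - y \<in> add_gen S"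
  using add_gen_add[of x S "- y"] add_gen_neg[of y S] by simp
lemma add_gen_min: "0 \<in> H \<Longrightarrow> (\<forall>x\<in>H. \<forall>y\<in>H. x + y \<in> H) \<Longrightarrow> (\<forall>x\<in>H. - x \<in> H) \<Longrightarrow> S \<subseteq> H \<Longrightarrow> add_gen S \<subseteq> H"
  unfolding add_gen_def by blast

lemma add_gen_hom:
  fixes f :: "'a::ab_group_add \<Rightarrow> 'c::ab_group_add"
  assumes fa: "\<And>x y. f (x + y) = f x + f y" and fS: "\<And>x. x \<in> S \<Longrightarrow> f x \<in> add_gen T"
    and u: "u \<in> add_gen S"
  shows "f u \<in> add_gen T"
proof -
  have f0: "f 0 = 0" using fa[of 0 0] by simp
  have fn: "f (-x) = - f x" for x
  proof -
    have "f (x + - x) = f x + f (-x)" by (rule fa)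
    hence "0 = f x + f (-x)" using f0 by simp
    thus ?thesis by (simp add: eq_neg_iff_add_eq_0 add.commute)
  qed
  have "add_gen S \<subseteq> {u. f u \<in> add_gen T}"
    by (rule add_gen_min) (auto simp: f0 fn fa fS add_gen_0 add_gen_add add_gen_neg)
  thus ?thesis using u by blast
qed

lemma mcomm_in: "p \<in> P \<Longrightarrow> g \<in> Xs \<Longrightarrow> mcomm act p g \<in> mcomm_set act P Xs"
  unfolding mcomm_set_def by (rule add_gen_incl) blast

lemma set_plus_VI: "x \<in> P \<Longrightarrow> y \<in> Q \<Longrightarrow> x + y \<in> set_plus_V P Q"
  unfolding set_plus_V_def by blast

locale rmod = group G for G :: "('g, 'b) monoid_scheme" (structure) +
  fixes act :: "'v::ab_group_add \<Rightarrow> 'g \<Rightarrow> 'v"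
  assumes rm: "right_module G act"
begin

lemma act_add: "g \<in> carrier G \<Longrightarrow> act (v + w) g = act v g + act w g"
  using rm unfolding right_module_def by blast
lemma act_one[simp]: "act v \<one> = v"
  using rm unfolding right_module_def by blast
lemma act_mult: "g \<in> carrier G \<Longrightarrow> h \<in> carrier G \<Longrightarrow> act v (g \<otimes> h) = act (act v g) h"
  using rm unfolding right_module_def by blast
lemma act_zero[simp]: "g \<in> carrier G \<Longrightarrow> act 0 g = 0"
proof -
  assume g: "g \<in> carrier G"
  have "act (0+0) g = act 0 g + act 0 g" using act_add[OF g] .
  thus ?thesis by simp
qed
lemma act_neg: "g \<in> carrier G \<Longrightarrow> act (- v) g = - act v g"
proof -
  assume g: "g \<in> carrier G"
  have "act (v + - v) g = act v g + act (-v) g" using act_add[OF g] .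
  hence "0 = act v g + act (-v) g" using g by simp
  thus ?thesis by (simp add: eq_neg_iff_add_eq_0 add.commute)
qed
lemma act_diff: "g \<in> carrier G \<Longrightarrow> act (v - w) g = act v g - act w g"
  using act_add[of g v "- w"] act_neg[of g w] by simp
lemma act_inv1[simp]: "g \<in> carrier G \<Longrightarrow> act (act v g) (inv g) = v"
  using act_mult[of g "inv g" v] by simp
lemma act_inv2[simp]: "g \<in> carrier G \<Longrightarrow> act (act v (inv g)) g = v"
  using act_mult[of "inv g" g v] by simp
lemma fix_inv: "g \<in> carrier G \<Longrightarrow> act v g = v \<Longrightarrow> act v (inv g) = v"
  using act_inv1[of g v] by simp
lemma act_inj: "g \<in> carrier G \<Longrightarrow> act v g = act w g \<Longrightarrow> v = w"
  using act_inv1[of g v] act_inv1[of g w] by metis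

lemma mcomm_act: "act v g = v + mcomm act v g"
  unfolding mcomm_def by simp

lemma mcomm_mult: "g \<in> carrier G \<Longrightarrow> h \<in> carrier G \<Longrightarrow>
   mcomm act v (g \<otimes> h) = mcomm act v g + mcomm act (act v g) h"
  unfolding mcomm_def by (simp add: act_mult)

lemma mcomm_inv: "g \<in> carrier G \<Longrightarrow> mcomm act v (inv g) = - mcomm act (act v (inv g)) g"
  unfolding mcomm_def by simp

lemma mcomm_conj: "g \<in> carrier G \<Longrightarrow> y \<in> carrier G \<Longrightarrow>
   act (mcomm act p g) y = mcomm act (act p y) (inv y \<otimes> g \<otimes> y)"
proof -
  assume g: "g \<in> carrier G" and y: "y \<in> carrier G"
  have "y \<otimes> (inv y \<otimes> g \<otimes> y) = g \<otimes> y" using g y by (simp add: m_assoc[symmetric])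
  hence "act (act p y) (inv y \<otimes> g \<otimes> y) = act (act p g) y"
    using g y by (metis act_mult inv_closed m_closed)
  thus ?thesis unfolding mcomm_def using g y by (simp add: act_add act_neg act_diff)
qed

lemma transport_U:
  assumes y: "y \<in> carrier G" and Xs: "Xs \<subseteq> carrier G"
    and PP: "\<forall>p\<in>P. act p y \<in> P'" and XY: "\<forall>g\<in>Xs. inv y \<otimes> g \<otimes> y \<in> Ys"
    and u: "u \<in> mcomm_set act P Xs"
  shows "act u y \<in> mcomm_set act P' Ys"
proof -
  have fS: "act w y \<in> add_gen {mcomm act x g |x g. x \<in> P' \<and> g \<in> Ys}"
    if wm: "w \<in> {mcomm act x g |x g. x \<in> P \<and> g \<in> Xs}" for w
  proof -
    obtain p g where w: "w = mcomm act p g" "p \<in> P" "g \<in> Xs" using wm by blast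
    have "act w y = mcomm act (act p y) (inv y \<otimes> g \<otimes> y)" using w Xs y mcomm_conj by auto
    thus ?thesis using PP XY w by (auto intro!: add_gen_incl)
  qed
  have u': "u \<in> add_gen {mcomm act x g |x g. x \<in> P \<and> g \<in> Xs}" using u unfolding mcomm_set_def .
  have "act u y \<in> add_gen {mcomm act x g |x g. x \<in> P' \<and> g \<in> Ys}"
    by (rule add_gen_hom[where f = "\<lambda>u. act u y", OF _ fS u']) (rule act_add[OF y])
  thus ?thesis unfolding mcomm_set_def .
qed

lemma transport_Z:
  assumes y: "y \<in> carrier G" and Ys: "Ys \<subseteq> carrier G"
    and XY: "\<forall>g\<in>Ys. y \<otimes> g \<otimes> inv y \<in> Xs"
    and z: "z \<in> centralizer_V act Xs"
  shows "act z y \<in> centralizer_V act Ys"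
  unfolding centralizer_V_def
proof (intro CollectI ballI)
  fix g assume g: "g \<in> Ys"
  hence gc: "g \<in> carrier G" using Ys by blast
  have e: "y \<otimes> g = (y \<otimes> g \<otimes> inv y) \<otimes> y" using y gc by (simp add: m_assoc)
  have "act (act z y) g = act z (y \<otimes> g)" using y gc by (simp add: act_mult)
  also have "\<dots> = act (act z (y \<otimes> g \<otimes> inv y)) y" using e y gc by (simp add: act_mult)
  also have "\<dots> = act z y" using z XY g unfolding centralizer_V_def by auto
  finally show "act (act z y) g = act z y" .
qed

lemma fixed_generate:
  assumes S: "S \<subseteq> carrier G" and fx: "\<forall>g\<in>S. act v g = v" and h: "h \<in> generate G S"
  shows "act v h = v"
  using h
proof (induction rule: generate.induct)
  case one then show ?case by simp
next
  case (incl h) then show ?case using fx by blast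
next
  case (inv h) then show ?case using fx S fix_inv by blast
next
  case (eng h1 h2) then show ?case using generate_in_carrier[OF S] by (simp add: act_mult)
qed

lemma fixed_conj:
  assumes y: "y \<in> carrier G" and h: "h \<in> carrier G" and zy: "act z y = z"
    and zk: "act z (inv y \<otimes> h \<otimes> y) = z"
  shows "act z h = z"
proof -
  have "act z (inv y \<otimes> h \<otimes> y) = act (act (act z (inv y)) h) y" using y h by (simp add: act_mult)
  moreover have "act z (inv y) = z" using fix_inv[OF y zy] .
  ultimately have "act (act z h) y = z" using zk by simp
  hence "act z h = act z (inv y)" using y by (metis act_inv1)
  thus ?thesis using fix_inv[OF y zy] by simp
qed

lemma conj_eq_elem:
  assumes eq: "conj_set G Xs p = conj_set G Ys q" and Xs: "Xs \<subseteq> carrier G" and Ys: "Ys \<subseteq> carrier G"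
    and p: "p \<in> carrier G" and q: "q \<in> carrier G" and g: "g \<in> Ys"
  shows "inv (q \<otimes> inv p) \<otimes> g \<otimes> (q \<otimes> inv p) \<in> Xs"
proof -
  have "inv q \<otimes> g \<otimes> q \<in> conj_set G Ys q" unfolding conj_set_def using g by blast
  then obtain h where h: "h \<in> Xs" "inv q \<otimes> g \<otimes> q = inv p \<otimes> h \<otimes> p"
    using eq unfolding conj_set_def by auto
  have hc: "h \<in> carrier G" using h Xs by blast
  have "inv (q \<otimes> inv p) = p \<otimes> inv q" using p q by (simp add: inv_mult_group)
  hence "inv (q \<otimes> inv p) \<otimes> g \<otimes> (q \<otimes> inv p) = p \<otimes> (inv q \<otimes> g \<otimes> q) \<otimes> inv p"
    using p q g Ys by (simp add: m_assoc subset_iff)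
  also have "\<dots> = p \<otimes> (inv p \<otimes> h \<otimes> p) \<otimes> inv p" using h by simp
  also have "\<dots> = h" using p hc by (simp add: m_assoc[symmetric], simp add: m_assoc)
  finally show ?thesis using h by simp
qed
end


lemma ms_0: "0 \<in> mcomm_set act P Xs" unfolding mcomm_set_def by (rule add_gen_0)
lemma ms_add: "x \<in> mcomm_set act P Xs \<Longrightarrow> y \<in> mcomm_set act P Xs \<Longrightarrow> x + y \<in> mcomm_set act P Xs"
  unfolding mcomm_set_def by (rule add_gen_add)
lemma ms_neg: "x \<in> mcomm_set act P Xs \<Longrightarrow> - x \<in> mcomm_set act P Xs"
  unfolding mcomm_set_def by (rule add_gen_neg)
lemma ms_diff: "x \<in> mcomm_set act P Xs \<Longrightarrow> y \<in> mcomm_set act P Xs \<Longrightarrow> x - y \<in> mcomm_set act P Xs"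
  unfolding mcomm_set_def by (rule add_gen_diff)

lemma sp_add:
  assumes "x \<in> set_plus_V (mcomm_set act P Xs) (mcomm_set act Q Ys)"
    "y \<in> set_plus_V (mcomm_set act P Xs) (mcomm_set act Q Ys)"
  shows "x + y \<in> set_plus_V (mcomm_set act P Xs) (mcomm_set act Q Ys)"
proof -
  obtain x1 x2 where x: "x = x1 + x2" "x1 \<in> mcomm_set act P Xs" "x2 \<in> mcomm_set act Q Ys"
    using assms(1) unfolding set_plus_V_def by blast
  obtain y1 y2 where y: "y = y1 + y2" "y1 \<in> mcomm_set act P Xs" "y2 \<in> mcomm_set act Q Ys"
    using assms(2) unfolding set_plus_V_def by blast
  have "x + y = (x1 + y1) + (x2 + y2)" using x y by (simp add: algebra_simps)
  thus ?thesis using x y ms_add set_plus_VI by metis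
qed

lemma sp_neg:
  assumes "x \<in> set_plus_V (mcomm_set act P Xs) (mcomm_set act Q Ys)"
  shows "- x \<in> set_plus_V (mcomm_set act P Xs) (mcomm_set act Q Ys)"
proof -
  obtain x1 x2 where x: "x = x1 + x2" "x1 \<in> mcomm_set act P Xs" "x2 \<in> mcomm_set act Q Ys"
    using assms(1) unfolding set_plus_V_def by blast
  have "- x = (- x1) + (- x2)" using x by (simp add: algebra_simps)
  thus ?thesis using x ms_neg set_plus_VI by metis
qed

lemma sp_0: "0 \<in> set_plus_V (mcomm_set act P Xs) (mcomm_set act Q Ys)"
  using set_plus_VI[OF ms_0 ms_0] by simp

context rmod
begin

lemma comm_generate:
  assumes Xs: "Xs \<subseteq> carrier G" and Ys: "Ys \<subseteq> carrier G" and h: "h \<in> generate G (Xs \<union> Ys)"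
  shows "\<forall>v. mcomm act v h \<in> set_plus_V (mcomm_set act UNIV Xs) (mcomm_set act UNIV Ys)"
  using h
proof (induction rule: generate.induct)
  case one
  then show ?case by (simp add: mcomm_def sp_0)
next
  case (incl h)
  show ?case
  proof
    fix v
    show "mcomm act v h \<in> set_plus_V (mcomm_set act UNIV Xs) (mcomm_set act UNIV Ys)"
    proof (cases "h \<in> Xs")
      case True
      then show ?thesis using set_plus_VI[OF mcomm_in[of v UNIV h Xs act] ms_0] by simp
    next
      case False
      then show ?thesis using incl set_plus_VI[OF ms_0 mcomm_in[of v UNIV h Ys act]] by simp
    qed
  qed
next
  case (inv h)
  have hc: "h \<in> carrier G" using inv Xs Ys by blast
  show ?case
  proof
    fix v
    have "mcomm act (act v (inv h)) h \<in> set_plus_V (mcomm_set act UNIV Xs) (mcomm_set act UNIV Ys)"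
    proof (cases "h \<in> Xs")
      case True
      then show ?thesis using set_plus_VI[OF mcomm_in[of "act v (inv h)" UNIV h Xs act] ms_0] by simp
    next
      case False
      then show ?thesis using inv set_plus_VI[OF ms_0 mcomm_in[of "act v (inv h)" UNIV h Ys act]] by simp
    qed
    thus "mcomm act v (inv h) \<in> set_plus_V (mcomm_set act UNIV Xs) (mcomm_set act UNIV Ys)"
      using mcomm_inv[OF hc] sp_neg by metis
  qed
next
  case (eng h1 h2)
  have c: "h1 \<in> carrier G" "h2 \<in> carrier G" using eng.hyps generate_in_carrier Xs Ys
    by (metis le_sup_iff)+
  show ?case using eng.IH mcomm_mult[OF c] sp_add by metis
qed

end


context rmod
begin

lemma main:
  assumes sA: "subgroup A G" and sB: "subgroup B G"
    and gen: "carrier G = generate G (A \<union> B)"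
    and axA: "\<forall>a \<in> A - {\<one>}. \<exists>b \<in> B - {\<one>}. conj_set G B a = conj_set G A b"
    and axB: "\<forall>b \<in> B - {\<one>}. \<exists>a \<in> A - {\<one>}. conj_set G A b = conj_set G B a"
    and cubic: "mcomm_set act (mcomm_set act (mcomm_set act UNIV A) A) A = {0}"
    and VG: "mcomm_set act UNIV (carrier G) = UNIV"
    and CVG: "centralizer_V act (carrier G) = {0}"
    and A0_def: "A0 = centralizer_in act A (mcomm_set act UNIV A) \<inter> centralizer_quot act A (centralizer_V act A)"
    and B0_def: "B0 = {\<one>} \<union> {b \<in> B - {\<one>}. \<exists>a \<in> A0 - {\<one>}. conj_set G B a = conj_set G A b}"
    and G0_def: "G0 = generate G (A0 \<union> B0)"
    and nt: "A0 \<noteq> {\<one>}"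
  shows "mcomm_set act UNIV A \<inter> mcomm_set act UNIV B = centralizer_V act G0
       \<and> is_direct_sum (mcomm_set act UNIV A) (centralizer_V act A) (centralizer_V act G0)"
proof -
  define UA where "UA = mcomm_set act UNIV A"
  define UB where "UB = mcomm_set act UNIV B"
  define ZA where "ZA = centralizer_V act A"
  define ZB where "ZB = centralizer_V act B"
  have Ac: "A \<subseteq> carrier G" using sA subgroup.subset by blast
  have Bc: "B \<subseteq> carrier G" using sB subgroup.subset by blast
  have one_A: "\<one> \<in> A" using sA subgroup.one_closed by blast
  have one_B: "\<one> \<in> B" using sB subgroup.one_closed by blast
  have ZA_iff: "z \<in> ZA \<longleftrightarrow> (\<forall>g\<in>A. act z g = z)" for z unfolding ZA_def centralizer_V_def by simp
  have ZB_iff: "z \<in> ZB \<longleftrightarrow> (\<forall>g\<in>B. act z g = z)" for z unfolding ZB_def centralizer_V_def by simp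
  have ZA_diff: "z \<in> ZA \<Longrightarrow> z' \<in> ZA \<Longrightarrow> z - z' \<in> ZA" for z z'
    using Ac by (auto simp: ZA_iff act_diff)
  have ZA_neg: "z \<in> ZA \<Longrightarrow> - z \<in> ZA" for z
    using Ac by (auto simp: ZA_iff act_neg)
  have ZA_0: "0 \<in> ZA" using Ac by (auto simp: ZA_iff)
  have UA_gen: "g \<in> A \<Longrightarrow> mcomm act v g \<in> UA" for g v unfolding UA_def by (rule mcomm_in) auto
  have UB_gen: "g \<in> B \<Longrightarrow> mcomm act v g \<in> UB" for g v unfolding UB_def by (rule mcomm_in) auto
  have A0A: "A0 \<subseteq> A" unfolding A0_def centralizer_in_def by blast
  have A0_fix: "g \<in> A0 \<Longrightarrow> u \<in> UA \<Longrightarrow> act u g = u" for g u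
    unfolding A0_def UA_def centralizer_in_def by blast
  have A0_Z: "g \<in> A0 \<Longrightarrow> mcomm act v g \<in> ZA" for g v
    unfolding A0_def ZA_def centralizer_quot_def by blast
  have A0_Zinv: "g \<in> A0 \<Longrightarrow> mcomm act v (inv g) \<in> ZA" for g v
  proof -
    assume g: "g \<in> A0"
    hence gc: "g \<in> carrier G" using A0A Ac by blast
    show ?thesis using mcomm_inv[OF gc, of v] A0_Z[OF g] ZA_neg by metis
  qed
  have F2A: "z = 0" if z: "z \<in> ZA" and g: "g \<in> B - {\<one>}" and zg: "act z g = z" for z g
  proof -
    obtain a1 where a1: "a1 \<in> A - {\<one>}" "conj_set G A g = conj_set G B a1" using axB g by blast
    have gc: "g \<in> carrier G" and a1c: "a1 \<in> carrier G" using g a1 Ac Bc by auto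
    have yc: "a1 \<otimes> inv g \<in> carrier G" using gc a1c by simp
    have zy: "act z (a1 \<otimes> inv g) = z" using z a1 gc a1c zg fix_inv[OF gc zg] by (simp add: act_mult ZA_iff)
    have fB: "act z h = z" if h: "h \<in> B" for h
    proof (rule fixed_conj[OF yc _ zy])
      show "h \<in> carrier G" using h Bc by blast
      have "inv (a1 \<otimes> inv g) \<otimes> h \<otimes> (a1 \<otimes> inv g) \<in> A"
        by (rule conj_eq_elem[OF a1(2) Ac Bc gc a1c h])
      thus "act z (inv (a1 \<otimes> inv g) \<otimes> h \<otimes> (a1 \<otimes> inv g)) = z" using z ZA_iff by blast
    qed
    have "act z h = z" if "h \<in> carrier G" for h
      using fixed_generate[of "A \<union> B" z h] that gen Ac Bc fB z ZA_iff by blast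
    hence "z \<in> centralizer_V act (carrier G)" unfolding centralizer_V_def by blast
    thus ?thesis using CVG by blast
  qed
  have F2B: "z = 0" if z: "z \<in> ZB" and g: "g \<in> A - {\<one>}" and zg: "act z g = z" for z g
  proof -
    obtain b1 where b1: "b1 \<in> B - {\<one>}" "conj_set G B g = conj_set G A b1" using axA g by blast
    have gc: "g \<in> carrier G" and b1c: "b1 \<in> carrier G" using g b1 Ac Bc by auto
    have yc: "b1 \<otimes> inv g \<in> carrier G" using gc b1c by simp
    have zy: "act z (b1 \<otimes> inv g) = z" using z b1 gc b1c zg fix_inv[OF gc zg] by (simp add: act_mult ZB_iff)
    have fA: "act z h = z" if h: "h \<in> A" for h
    proof (rule fixed_conj[OF yc _ zy])
      show "h \<in> carrier G" using h Ac by blast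
      have "inv (b1 \<otimes> inv g) \<otimes> h \<otimes> (b1 \<otimes> inv g) \<in> B"
        by (rule conj_eq_elem[OF b1(2) Bc Ac gc b1c h])
      thus "act z (inv (b1 \<otimes> inv g) \<otimes> h \<otimes> (b1 \<otimes> inv g)) = z" using z ZB_iff by blast
    qed
    have "act z h = z" if "h \<in> carrier G" for h
      using fixed_generate[of "A \<union> B" z h] that gen Ac Bc fA z ZB_iff by blast
    hence "z \<in> centralizer_V act (carrier G)" unfolding centralizer_V_def by blast
    thus ?thesis using CVG by blast
  qed
  have "\<one> \<in> A0" unfolding A0_def centralizer_in_def centralizer_quot_def using one_A
    by (simp add: mcomm_def ZA_0[unfolded ZA_def])
  then obtain a where a: "a \<in> A0" "a \<noteq> \<one>" using nt by blast
  have aA: "a \<in> A" and ac: "a \<in> carrier G" using a A0A Ac by auto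
  obtain b where b: "b \<in> B - {\<one>}" "conj_set G B a = conj_set G A b" using axA aA a by blast
  have bc: "b \<in> carrier G" using b Bc by blast
  define x where "x = b \<otimes> inv a"
  have xc: "x \<in> carrier G" using bc ac x_def by simp
  have xA: "\<forall>g\<in>A. inv x \<otimes> g \<otimes> x \<in> B"
    using conj_eq_elem[OF b(2) Bc Ac ac bc] x_def by blast
  have xB: "\<forall>g\<in>B. x \<otimes> g \<otimes> inv x \<in> A"
  proof
    fix g assume g: "g \<in> B"
    have "inv (a \<otimes> inv b) \<otimes> g \<otimes> (a \<otimes> inv b) \<in> A"
      using conj_eq_elem[OF b(2)[symmetric] Ac Bc bc ac g] .
    moreover have "inv (a \<otimes> inv b) = x" using ac bc x_def by (simp add: inv_mult_group)
    moreover have "a \<otimes> inv b = inv x" using ac bc x_def by (simp add: inv_mult_group)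
    ultimately show "x \<otimes> g \<otimes> inv x \<in> A" by simp
  qed
  have xB': "\<forall>g\<in>B. inv (inv x) \<otimes> g \<otimes> inv x \<in> A" using xB xc by simp
  have UA_UB: "u \<in> UA \<Longrightarrow> act u x \<in> UB" for u
    unfolding UA_def UB_def by (rule transport_U[OF xc Ac _ xA]) auto
  have UB_UA: "u \<in> UB \<Longrightarrow> act u (inv x) \<in> UA" for u
    unfolding UA_def UB_def by (rule transport_U[OF _ Bc _ xB']) (auto simp: xc)
  have ZA_ZB: "z \<in> ZA \<Longrightarrow> act z x \<in> ZB" for z
    unfolding ZA_def ZB_def by (rule transport_Z[OF xc Bc xB])
  define c where "c = inv x \<otimes> a \<otimes> x"
  have cB: "c \<in> B" using xA aA c_def by blast
  have cc: "c \<in> carrier G" using cB Bc by blast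
  have c1: "c \<noteq> \<one>"
  proof
    assume "c = \<one>"
    hence "x \<otimes> c \<otimes> inv x = \<one>" using xc by simp
    moreover have "x \<otimes> c \<otimes> inv x = a" unfolding c_def using xc ac
      by (simp add: m_assoc[symmetric], simp add: m_assoc)
    ultimately show False using a by simp
  qed
  have cfix: "u \<in> UB \<Longrightarrow> act u c = u" for u
  proof -
    assume u: "u \<in> UB"
    have "act u c = act (act (act u (inv x)) a) x" unfolding c_def using xc ac by (simp add: act_mult)
    also have "\<dots> = u" using A0_fix[OF a(1) UB_UA[OF u]] xc by simp
    finally show ?thesis .
  qed
  have S1: "z \<in> ZA \<Longrightarrow> z \<in> UB \<Longrightarrow> z = 0" for z using F2A cfix cB c1 by blast
  have S2: "u \<in> UA \<Longrightarrow> u \<in> ZB \<Longrightarrow> u = 0" for u using F2B A0_fix a aA by blast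
  have S3: "z \<in> UA" if z: "z \<in> ZA" for z
  proof -
    define y where "y = act z x"
    have yZ: "y \<in> ZB" using ZA_ZB[OF z] y_def by simp
    have yab: "act y a = act z b" unfolding y_def x_def using ac bc by (simp add: act_mult[symmetric] m_assoc)
    define t where "t = z - mcomm act y a"
    have t2: "t = y - mcomm act z b" unfolding t_def mcomm_def using yab by (simp add: algebra_simps)
    have tZ: "t \<in> ZA" unfolding t_def using ZA_diff[OF z A0_Z[OF a(1)]] .
    have "act t c = t" unfolding t2 using cc cfix[OF UB_gen[OF _]] b yZ cB
      by (simp add: act_diff ZB_iff)
    hence "t = 0" using F2A[OF tZ _] cB c1 by blast
    hence "z = mcomm act y a" unfolding t_def by simp
    thus ?thesis using UA_gen[OF aA] by simp
  qed
  have UA_dec: "\<exists>z\<in>ZA. u + z \<in> UB" if u: "u \<in> UA" for u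
  proof -
    have "act u x = act (act u b) (inv a)" unfolding x_def using ac bc by (simp add: act_mult)
    also have "\<dots> = u + mcomm act u b + mcomm act (act u b) (inv a)" by (simp add: mcomm_act)
    finally have e: "act u x = u + mcomm act u b + mcomm act (act u b) (inv a)" .
    have "u + mcomm act (act u b) (inv a) = act u x - mcomm act u b" using e by (simp add: algebra_simps)
    moreover have "act u x - mcomm act u b \<in> UB" unfolding UB_def
      using ms_diff UA_UB[OF u] UB_gen b unfolding UB_def by blast
    ultimately show ?thesis using A0_Zinv[OF a(1), of "act u b"] by (metis)
  qed
  have UB_dec: "\<exists>y\<in>ZB. u + y \<in> UA" if u: "u \<in> UB" for u
  proof -
    obtain a2 where a2: "a2 \<in> A - {\<one>}" "conj_set G A c = conj_set G B a2" using axB cB c1 by blast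
    have a2c: "a2 \<in> carrier G" using a2 Ac by blast
    define y2 where "y2 = a2 \<otimes> inv c"
    have y2c: "y2 \<in> carrier G" using a2c cc y2_def by simp
    have y2B: "\<forall>g\<in>B. inv y2 \<otimes> g \<otimes> y2 \<in> A"
      using conj_eq_elem[OF a2(2) Ac Bc cc a2c] y2_def by blast
    have t: "act u y2 \<in> UA" unfolding UA_def
      using transport_U[OF y2c Bc _ y2B, of UNIV UNIV u] u unfolding UB_def by auto
    have "act u y2 = act (act u a2) (inv c)" unfolding y2_def using a2c cc by (simp add: act_mult)
    also have "\<dots> = u + mcomm act u a2 + mcomm act (act u a2) (inv c)" by (simp add: mcomm_act)
    finally have e: "act u y2 = u + mcomm act u a2 + mcomm act (act u a2) (inv c)" .
    have ic: "inv c = inv x \<otimes> inv a \<otimes> x" unfolding c_def using xc ac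
      by (simp add: inv_mult_group m_assoc)
    have yZ: "mcomm act w (inv c) \<in> ZB" for w
    proof -
      have "mcomm act w (inv c) = act (mcomm act (act w (inv x)) (inv a)) x"
        unfolding ic using mcomm_conj[of "inv a" x "act w (inv x)"] ac xc by simp
      thus ?thesis using ZA_ZB[OF A0_Zinv[OF a(1)]] by simp
    qed
    have "u + mcomm act (act u a2) (inv c) = act u y2 - mcomm act u a2" using e by (simp add: algebra_simps)
    moreover have "act u y2 - mcomm act u a2 \<in> UA" using ms_diff t UA_gen a2 unfolding UA_def by blast
    ultimately show ?thesis using yZ[of "act u a2"] by metis
  qed
  have ixc: "inv x \<in> carrier G" using xc by simp
  have cubB: "d \<in> ZB" if d: "d \<in> mcomm_set act UB B" for d
  proof -
    have T2: "\<forall>p\<in>mcomm_set act UB B. act p (inv x) \<in> mcomm_set act UA A"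
      using transport_U[OF ixc Bc _ xB'] UB_UA by blast
    have "mcomm act d h = 0" if h: "h \<in> B" for h
    proof -
      have "mcomm act d h \<in> mcomm_set act (mcomm_set act UB B) B" using d h by (rule mcomm_in)
      hence "act (mcomm act d h) (inv x) \<in> mcomm_set act (mcomm_set act UA A) A"
        using transport_U[OF ixc Bc T2 xB'] by blast
      hence "act (mcomm act d h) (inv x) = act 0 (inv x)" using cubic ixc unfolding UA_def by simp
      thus ?thesis using act_inj[OF ixc] by blast
    qed
    thus ?thesis unfolding ZB_iff by (simp add: mcomm_act)
  qed
  have Wsub: "act w g = w" if w: "w \<in> UA" "w \<in> UB" and g: "g \<in> G0" for w g
  proof -
    have B0B: "B0 \<subseteq> B" unfolding B0_def using one_B by blast
    have Sc: "A0 \<union> B0 \<subseteq> carrier G" using A0A B0B Ac Bc by blast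
    have fx: "act w h = w" if h: "h \<in> A0 \<union> B0" for h
    proof (cases "h \<in> A0")
      case True
      then show ?thesis using A0_fix w by blast
    next
      case False
      hence "h = \<one> \<or> (h \<in> B - {\<one>} \<and> (\<exists>a' \<in> A0 - {\<one>}. conj_set G B a' = conj_set G A h))"
        using h unfolding B0_def by blast
      moreover
      {
        assume hB: "h \<in> B - {\<one>}" and "\<exists>a' \<in> A0 - {\<one>}. conj_set G B a' = conj_set G A h"
        then obtain a' where a': "a' \<in> A0 - {\<one>}" "conj_set G B a' = conj_set G A h" by blast
        have a'c: "a' \<in> carrier G" and hc: "h \<in> carrier G" using a' hB A0A Ac Bc by auto
        define x' where "x' = h \<otimes> inv a'"
        have x'c: "x' \<in> carrier G" using a'c hc x'_def by simp
        have x'A: "\<forall>g\<in>A. inv x' \<otimes> g \<otimes> x' \<in> B"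
          using conj_eq_elem[OF a'(2) Bc Ac a'c hc] x'_def by blast
        have wx: "act w x' \<in> UB" unfolding UA_def UB_def
          using transport_U[OF x'c Ac _ x'A, of UNIV UNIV w] w unfolding UA_def by auto
        define wg where "wg = act w h"
        have wgB: "wg \<in> UB" unfolding wg_def using mcomm_act[of w h] w(2) UB_gen[of h w] hB
          ms_add unfolding UB_def by (metis DiffD1)
        have "act w x' = act wg (inv a')" unfolding x'_def wg_def using a'c hc by (simp add: act_mult)
        hence "mcomm act wg (inv a') = act w x' - wg" unfolding mcomm_def by simp
        hence "mcomm act wg (inv a') \<in> UB" using wx wgB ms_diff unfolding UB_def by metis
        hence "mcomm act wg (inv a') = 0" using S1 A0_Zinv a' by blast
        hence "act wg (inv a') = wg" by (simp add: mcomm_act)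
        hence wga: "act wg a' = wg" using fix_inv[of "inv a'" wg] a'c by simp
        define d where "d = mcomm act w h"
        have dZ: "d \<in> ZB" using cubB mcomm_in[of w UB h B act] w hB unfolding d_def by blast
        have "act d a' = d" unfolding d_def mcomm_def using wga A0_fix[of a' w] a' w a'c
          unfolding wg_def by (simp add: act_add act_neg act_diff)
        hence "d = 0" using F2B[OF dZ, of a'] a' A0A by blast
        hence "act w h = w" unfolding d_def by (simp add: mcomm_act)
      }
      ultimately show ?thesis by auto
    qed
    show ?thesis using fixed_generate[OF Sc _ g[unfolded G0_def]] fx by blast
  qed
  have bB0: "b \<in> B0" unfolding B0_def using b a by blast
  have bG0: "b \<in> G0" "a \<in> G0" unfolding G0_def using bB0 a by (auto intro: generate.incl)
  have CG0_iff: "v \<in> centralizer_V act G0 \<longleftrightarrow> (\<forall>g\<in>G0. act v g = v)" for v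
    unfolding centralizer_V_def by simp
  have W_CG0: "UA \<inter> UB \<subseteq> centralizer_V act G0" using Wsub CG0_iff by blast
  have F1: "v \<in> set_plus_V UA UB" for v
  proof -
    have "add_gen {mcomm act x y |x y. x \<in> UNIV \<and> y \<in> carrier G} \<subseteq> set_plus_V UA UB"
    proof (rule add_gen_min)
      show "0 \<in> set_plus_V UA UB" unfolding UA_def UB_def by (rule sp_0)
      show "\<forall>x\<in>set_plus_V UA UB. \<forall>y\<in>set_plus_V UA UB. x + y \<in> set_plus_V UA UB"
        unfolding UA_def UB_def using sp_add by blast
      show "\<forall>x\<in>set_plus_V UA UB. - x \<in> set_plus_V UA UB"
        unfolding UA_def UB_def using sp_neg by blast
      show "{mcomm act x y |x y. x \<in> UNIV \<and> y \<in> carrier G} \<subseteq> set_plus_V UA UB"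
        using comm_generate[OF Ac Bc] gen unfolding UA_def UB_def by blast
    qed
    thus ?thesis using VG unfolding mcomm_set_def by blast
  qed
  have CG0_W: "v \<in> UA \<inter> UB" if v: "v \<in> centralizer_V act G0" for v
  proof -
    obtain u1 u2 where u: "v = u1 + u2" "u1 \<in> UA" "u2 \<in> UB" using F1[of v] unfolding set_plus_V_def by blast
    obtain y where y: "y \<in> ZB" "u2 + y \<in> UA" using UB_dec[OF u(3)] by blast
    define u' where "u' = u1 + (u2 + y)"
    have u'A: "u' \<in> UA" unfolding u'_def using ms_add u y unfolding UA_def by blast
    have vu: "v = u' - y" unfolding u'_def u by simp
    have "act v a = v" using v bG0 CG0_iff by blast
    hence "act u' a - act y a = u' - y" using vu ac by (simp add: act_diff)
    hence "act y a = y" using A0_fix[OF a(1) u'A] by simp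
    hence "y = 0" using F2B[OF y(1), of a] a aA by blast
    hence vA: "v \<in> UA" using vu u'A by simp
    obtain z where z: "z \<in> ZA" "v + z \<in> UB" using UA_dec[OF vA] by blast
    have "v + z \<in> UA" using vA S3[OF z(1)] ms_add unfolding UA_def by blast
    hence "act (v + z) b = v + z" using Wsub z bG0 by blast
    moreover have "act v b = v" using v bG0 CG0_iff by blast
    ultimately have "act z b = z" using bc by (simp add: act_add)
    hence "z = 0" using F2A[OF z(1) b(1)] by blast
    thus ?thesis using vA z by simp
  qed
  have partA: "UA \<inter> UB = centralizer_V act G0" using W_CG0 CG0_W by blast
  have partB1: "UA = set_plus_V ZA (centralizer_V act G0)"
  proof
    show "UA \<subseteq> set_plus_V ZA (centralizer_V act G0)"
    proof
      fix u assume u: "u \<in> UA"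
      obtain z where z: "z \<in> ZA" "u + z \<in> UB" using UA_dec[OF u] by blast
      have "u + z \<in> UA" using u S3[OF z(1)] ms_add unfolding UA_def by blast
      hence "u + z \<in> centralizer_V act G0" using partA z by blast
      moreover have "u = (- z) + (u + z)" by simp
      ultimately show "u \<in> set_plus_V ZA (centralizer_V act G0)"
        using set_plus_VI[OF ZA_neg[OF z(1)]] by metis
    qed
    show "set_plus_V ZA (centralizer_V act G0) \<subseteq> UA"
      unfolding set_plus_V_def using S3 partA ms_add unfolding UA_def by blast
  qed
  have partB2: "ZA \<inter> centralizer_V act G0 = {0}"
  proof
    show "ZA \<inter> centralizer_V act G0 \<subseteq> {0}"
      using F2A b(1) bG0 CG0_iff by blast
    have B0B: "B0 \<subseteq> B" unfolding B0_def using one_B by blast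
    have Sc: "A0 \<union> B0 \<subseteq> carrier G" using A0A B0B Ac Bc by blast
    have "G0 \<subseteq> carrier G" unfolding G0_def using generate_incl[OF Sc] .
    hence "0 \<in> centralizer_V act G0" unfolding CG0_iff by auto
    thus "{0} \<subseteq> ZA \<inter> centralizer_V act G0" using ZA_0 by blast
  qed
  show ?thesis using partA partB1 partB2 unfolding is_direct_sum_def UA_def UB_def ZA_def by simp
qed
end

theorem lemma3p12:
  fixes G :: "('g, 'b) monoid_scheme"
    and A B :: "'g set"
    and act :: "'v::ab_group_add \<Rightarrow> 'g \<Rightarrow> 'v"
  assumes rank1: "rank_one_group G A B"
    and module: "right_module G act"
    and cubic: "mcomm_set act (mcomm_set act (mcomm_set act UNIV A) A) A = {0}"
    and not_quad: "mcomm_set act (mcomm_set act (mcomm_set act UNIV (carrier G)) (carrier G)) (carrier G) \<noteq> {0}"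
    and VG: "mcomm_set act UNIV (carrier G) = UNIV"
    and CVG: "centralizer_V act (carrier G) = {0}"
  defines "A0 \<equiv> centralizer_in act A (mcomm_set act UNIV A) \<inter> centralizer_quot act A (centralizer_V act A)"
  defines "B0 \<equiv> {\<one>\<^bsub>G\<^esub>} \<union> {b \<in> B - {\<one>\<^bsub>G\<^esub>}. \<exists>a \<in> A0 - {\<one>\<^bsub>G\<^esub>}. conj_set G B a = conj_set G A b}"
  defines "G0 \<equiv> generate G (A0 \<union> B0)"
  assumes A0_nontriv: "A0 \<noteq> {\<one>\<^bsub>G\<^esub>}"
  shows "mcomm_set act UNIV A \<inter> mcomm_set act UNIV B = centralizer_V act G0
       \<and> is_direct_sum (mcomm_set act UNIV A) (centralizer_V act A) (centralizer_V act G0)"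
proof -
  have g: "group G" using rank1 unfolding rank_one_group_def by blast
  interpret rmod G act using g module by (simp add: rmod_def rmod_axioms_def)
  show ?thesis
    by (rule main[OF _ _ _ _ _ cubic VG CVG A0_def[THEN meta_eq_to_obj_eq]
          B0_def[THEN meta_eq_to_obj_eq] G0_def[THEN meta_eq_to_obj_eq] A0_nontriv])
       (use rank1 in \<open>auto simp: rank_one_group_def\<close>)
qed

end
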